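(* The calibrated hypergraph category $G_C\Omega$ equipped with the monadic multiplication $\smile$ given by $(H,\varrho)\smile(K,\varsigma)=(H\smile K,\varrho\smile\varsigma)$ and unit $(O,\varepsilon)$ is a graded $\Omega$ monad.
   Context: $\Omega$ is the category of finite ordinals $[l]=\{0,\dots,l-1\}$ and all functions, strict monoidal with $[l]\smile[m]=[l+m]$, $f\smile g(i)=f(i)$ for $i\in[l]$, $g(i-l)+p$ for $i\in[m]+l$, unit $[0]$. $G[l]$ is the set of hypergraphs on $[l]$ (sets of non empty subsets), $Gf(H)=\{f(X)\mid X\in H\}$, $H\smile K=H\cup(K+l)$, $O=\emptyset$. Fix finite additive commutative monoids $\mathsf{A}$, $\mathsf{M}$; $\mathsf{A}^X$ is the monoid of functions $X\to\mathsf{A}$, $f_\star(w)(s)=\sum_{f(r)=s}w(r)$, $f_*(\varpi)(v)=\sum_{f_\star(w)=v}\varpi(w)$. A calibration $\varrho\in C(H)$ assigns to each $X\in H$ a function $\varrho_X:\mathsf{A}^X\to\mathsf{M}$; $f_{H*}(\varrho)_Y=\sum_{X\in H,f(X)=Y}f|_{X*}(\varrho_X)$. The calibrated hypergraph category $G_C\Omega$ is the $\Omega$ category with objects $G_C[l]=\{(H,\varrho)\mid H\in G[l],\varrho\in C(H)\}$ and morphisms $G_Cf(H,\varrho)=(Gf(H),f_{H*}(\varrho))$. The calibration product is $(\varrho\smile\varsigma)_X=\varrho_X$ for $X\in H$, $\varsigma_{X-l}\circ t_{Xl\star}$ for $X\in K+l$ (with $t_{Xl}(r)=r-l$), and $\varepsilon=e_\emptyset$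 (empty function). A graded $\Omega$ monad is a concrete $\Omega$ category $D\Omega$ with maps $\smile:D[l]\times D[m]\to D([l]\smile[m])$ and $\iota\in D[0]$ that are associative, unital ($\lambda\smile\iota=\iota\smile\lambda=\lambda$) and satisfy $Df\smile Dg(\lambda\smile\mu)=Df(\lambda)\smile Dg(\mu)$. *)

theory Defs
  imports Main "HOL-Library.FuncSet"
begin

definition omega_hom :: "nat \<Rightarrow> nat \<Rightarrow> (nat \<Rightarrow> nat) set" where
  "omega_hom l p = {..<l} \<rightarrow>\<^sub>E {..<p}"

definition omega_id :: "nat \<Rightarrow> nat \<Rightarrow> nat" where
  "omega_id l = (\<lambda>i\<in>{..<l}. i)"

definition omega_comp :: "nat \<Rightarrow> (nat \<Rightarrow> nat) \<Rightarrow> (nat \<Rightarrow> nat) \<Rightarrow> nat \<Rightarrow> nat" where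
  "omega_comp l g f = compose {..<l} g f"

definition omega_cup :: "nat \<Rightarrow> nat \<Rightarrow> nat \<Rightarrow> (nat \<Rightarrow> nat) \<Rightarrow> (nat \<Rightarrow> nat) \<Rightarrow> nat \<Rightarrow> nat" where
  "omega_cup l m p f g = (\<lambda>i. if i < l then f i else if i < l + m then g (i - l) + p else undefined)"

text \<open>A concrete Omega category (a functor D : Omega -> Set, D l being the set
  D[l] and Dmap f the map Df) with a graded multiplication cup (cup l x y
  for x in D[l]) and a unit iota in D[0].\<close>

definition graded_Omega_monad ::
  "(nat \<Rightarrow> 'o set) \<Rightarrow> ((nat \<Rightarrow> nat) \<Rightarrow> 'o \<Rightarrow> 'o) \<Rightarrow> (nat \<Rightarrow> 'o \<Rightarrow> 'o \<Rightarrow> 'o) \<Rightarrow> 'o \<Rightarrow> bool" where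
  "graded_Omega_monad D Dmap cup iota \<longleftrightarrow>
     \<comment> \<open>concrete Omega category (functor to Set)\<close>
     (\<forall>l p f x. f \<in> omega_hom l p \<longrightarrow> x \<in> D l \<longrightarrow> Dmap f x \<in> D p) \<and>
     (\<forall>l x. x \<in> D l \<longrightarrow> Dmap (omega_id l) x = x) \<and>
     (\<forall>l p q f g x. f \<in> omega_hom l p \<longrightarrow> g \<in> omega_hom p q \<longrightarrow> x \<in> D l \<longrightarrow>
        Dmap (omega_comp l g f) x = Dmap g (Dmap f x)) \<and>
     \<comment> \<open>multiplication and unit\<close>
     (\<forall>l m x y. x \<in> D l \<longrightarrow> y \<in> D m \<longrightarrow> cup l x y \<in> D (l + m)) \<and>
     iota \<in> D 0 \<and>
     \<comment> \<open>associativity\<close>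
     (\<forall>l m n x y z. x \<in> D l \<longrightarrow> y \<in> D m \<longrightarrow> z \<in> D n \<longrightarrow>
        cup (l + m) (cup l x y) z = cup l x (cup m y z)) \<and>
     \<comment> \<open>unitality\<close>
     (\<forall>l x. x \<in> D l \<longrightarrow> cup l x iota = x \<and> cup 0 iota x = x) \<and>
     \<comment> \<open>naturality: D(f \<smile> g)(x \<smile> y) = Df(x) \<smile> Dg(y)\<close>
     (\<forall>l m p q f g x y. f \<in> omega_hom l p \<longrightarrow> g \<in> omega_hom m q \<longrightarrow>
        x \<in> D l \<longrightarrow> y \<in> D m \<longrightarrow>
        Dmap (omega_cup l m p f g) (cup l x y) = cup p (Dmap f x) (Dmap g y))"

definition hypergraphs :: "nat \<Rightarrow> nat set set set" where
  "hypergraphs l = {H. \<forall>X\<in>H. X \<noteq> {} \<and> X \<subseteq> {..<l}}"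

definition shift_set :: "nat \<Rightarrow> nat set \<Rightarrow> nat set" where
  "shift_set l X = (\<lambda>r. r + l) ` X"

definition hg_cup :: "nat \<Rightarrow> nat set set \<Rightarrow> nat set set \<Rightarrow> nat set set" where
  "hg_cup l H K = H \<union> shift_set l ` K"

text \<open>A^X is represented by functions nat => 'a vanishing outside X.\<close>
definition Fun :: "nat set \<Rightarrow> (nat \<Rightarrow> 'a::zero) set" where
  "Fun X = {w. \<forall>r. r \<notin> X \<longrightarrow> w r = 0}"

definition push_star :: "nat set \<Rightarrow> (nat \<Rightarrow> nat) \<Rightarrow> (nat \<Rightarrow> 'a::comm_monoid_add) \<Rightarrow> nat \<Rightarrow> 'a" where
  "push_star X f w = (\<lambda>s. \<Sum>r\<in>{r\<in>X. f r = s}. w r)"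

definition push_cal :: "nat set \<Rightarrow> (nat \<Rightarrow> nat) \<Rightarrow> ((nat \<Rightarrow> 'a::comm_monoid_add) \<Rightarrow> 'm::comm_monoid_add)
    \<Rightarrow> (nat \<Rightarrow> 'a) \<Rightarrow> 'm" where
  "push_cal X f vp = (\<lambda>v. \<Sum>w\<in>{w\<in>Fun X. push_star X f w = v}. vp w)"

text \<open>A calibration on H: rho X is a map A^X -> M for X in H; the representation
  is made canonical by requiring value 0 outside H and outside A^X.\<close>
definition calibrations :: "nat set set \<Rightarrow> (nat set \<Rightarrow> (nat \<Rightarrow> 'a::zero) \<Rightarrow> 'm::zero) set" where
  "calibrations H = {\<rho>. (\<forall>X. X \<notin> H \<longrightarrow> (\<forall>w. \<rho> X w = 0)) \<and>
                        (\<forall>X\<in>H. \<forall>w. w \<notin> Fun X \<longrightarrow> \<rho> X w = 0)}"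

definition cal_push :: "nat set set \<Rightarrow> (nat \<Rightarrow> nat) \<Rightarrow> (nat set \<Rightarrow> (nat \<Rightarrow> 'a::comm_monoid_add) \<Rightarrow> 'm::comm_monoid_add)
    \<Rightarrow> nat set \<Rightarrow> (nat \<Rightarrow> 'a) \<Rightarrow> 'm" where
  "cal_push H f \<rho> = (\<lambda>Y v. \<Sum>X\<in>{X\<in>H. f ` X = Y}. push_cal X f (\<rho> X) v)"

definition cal_cup :: "nat \<Rightarrow> nat set set \<Rightarrow> nat set set
    \<Rightarrow> (nat set \<Rightarrow> (nat \<Rightarrow> 'a::comm_monoid_add) \<Rightarrow> 'm::comm_monoid_add)
    \<Rightarrow> (nat set \<Rightarrow> (nat \<Rightarrow> 'a) \<Rightarrow> 'm) \<Rightarrow> nat set \<Rightarrow> (nat \<Rightarrow> 'a) \<Rightarrow> 'm" where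
  "cal_cup l H K \<rho> \<sigma> = (\<lambda>X w.
     if X \<in> H then \<rho> X w
     else if X \<in> shift_set l ` K \<and> w \<in> Fun X
       then \<sigma> ((\<lambda>r. r - l) ` X) (push_star X (\<lambda>r. r - l) w)
     else 0)"

text \<open>epsilon = e_emptyset, the (unique) calibration of the empty hypergraph.\<close>
definition cal_unit :: "nat set \<Rightarrow> (nat \<Rightarrow> 'a::zero) \<Rightarrow> 'm::zero" where
  "cal_unit = (\<lambda>X w. 0)"

type_synonym ('a, 'm) chg = "nat set set \<times> (nat set \<Rightarrow> (nat \<Rightarrow> 'a) \<Rightarrow> 'm)"

definition GC :: "nat \<Rightarrow> ('a::comm_monoid_add, 'm::comm_monoid_add) chg set" where
  "GC l = {(H, \<rho>). H \<in> hypergraphs l \<and> \<rho> \<in> calibrations H}"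

definition GC_map :: "(nat \<Rightarrow> nat) \<Rightarrow> ('a::comm_monoid_add, 'm::comm_monoid_add) chg \<Rightarrow> ('a, 'm) chg" where
  "GC_map f = (\<lambda>(H, \<rho>). ((`) f ` H, cal_push H f \<rho>))"

definition GC_cup :: "nat \<Rightarrow> ('a::comm_monoid_add, 'm::comm_monoid_add) chg \<Rightarrow> ('a, 'm) chg \<Rightarrow> ('a, 'm) chg" where
  "GC_cup l = (\<lambda>(H, \<rho>) (K, \<sigma>). (hg_cup l H K, cal_cup l H K \<rho> \<sigma>))"

definition GC_unit :: "('a::comm_monoid_add, 'm::comm_monoid_add) chg" where
  "GC_unit = ({}, cal_unit)"

end

theory Submission
  imports Defs
begin


lemma finite_Fun: "finite X \<Longrightarrow> finite (Fun X :: (nat \<Rightarrow> 'a::{zero,finite}) set)"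
proof -
  assume fX: "finite X"
  have "Fun X \<subseteq> (\<lambda>g r. if r \<in> X then g r else 0) ` (X \<rightarrow>\<^sub>E (UNIV::'a set))"
  proof
    fix w :: "nat \<Rightarrow> 'a" assume "w \<in> Fun X"
    then have "w = (\<lambda>r. if r\<in>X then restrict w X r else 0)" by (auto simp: Fun_def fun_eq_iff)
    moreover have "restrict w X \<in> X \<rightarrow>\<^sub>E UNIV" by simp
    ultimately show "w \<in> (\<lambda>g r. if r \<in> X then g r else 0) ` (X \<rightarrow>\<^sub>E (UNIV::'a set))" by blast
  qed
  moreover have "finite (X \<rightarrow>\<^sub>E (UNIV::'a set))" using fX by (intro finite_PiE) auto
  ultimately show ?thesis by (metis finite_surj)
qed

lemma ps_cong: "(\<And>r. r\<in>X \<Longrightarrow> f r = g r) \<Longrightarrow> push_star X f = push_star X g"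
proof -
  assume a: "\<And>r. r\<in>X \<Longrightarrow> f r = g r"
  have "\<And>s. {r\<in>X. f r = s} = {r\<in>X. g r = s}" using a by auto
  then show ?thesis unfolding push_star_def by simp
qed

lemma ps_Fun: "push_star X f w \<in> Fun (f ` X)"
  unfolding Fun_def
proof (intro CollectI allI impI)
  fix s assume "s \<notin> f ` X"
  then have e: "{r\<in>X. f r = s} = {}" by auto
  show "push_star X f w s = 0" unfolding push_star_def e by simp
qed

lemma ps_id: "w \<in> Fun X \<Longrightarrow> (\<And>r. r\<in>X \<Longrightarrow> f r = r) \<Longrightarrow> push_star X f w = w"
proof -
  assume w: "w \<in> Fun X" and a: "\<And>r. r\<in>X \<Longrightarrow> f r = r"
  have "\<And>s. {r\<in>X. f r = s} = (if s \<in> X then {s} else {})" using a by auto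
  then show ?thesis using w unfolding push_star_def Fun_def by (auto simp: fun_eq_iff)
qed

lemma ps_comp: "finite X \<Longrightarrow> push_star (f ` X) g (push_star X f w) = push_star X (\<lambda>r. g (f r)) w"
proof (rule ext)
  fix s assume fX: "finite X"
  let ?S = "{r\<in>X. g (f r) = s}" and ?T = "{t\<in>f ` X. g t = s}"
  have "(\<Sum>y\<in>?T. sum w {x\<in>?S. f x = y}) = sum w ?S"
    by (rule sum.group) (use fX in auto)
  moreover have "\<And>y. y \<in> ?T \<Longrightarrow> {x\<in>?S. f x = y} = {r\<in>X. f r = y}" by auto
  ultimately show "push_star (f ` X) g (push_star X f w) s = push_star X (\<lambda>r. g (f r)) w s"
    unfolding push_star_def by simp
qed

lemma pc_cong: "(\<And>r. r\<in>X \<Longrightarrow> f r = g r) \<Longrightarrow> push_cal X f = push_cal X g"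
  unfolding push_cal_def by (simp add: ps_cong[of X f g])

lemma pc_zero: "v \<notin> Fun (f ` X) \<Longrightarrow> push_cal X f \<psi> v = 0"
proof -
  assume "v \<notin> Fun (f ` X)"
  then have e: "{w\<in>Fun X. push_star X f w = v} = {}" using ps_Fun[of X f] by auto
  show ?thesis unfolding push_cal_def e by simp
qed

lemma pc_comp:
  assumes fX: "finite X"
  shows "push_cal (f ` X) g (push_cal X f \<psi>) = push_cal X (\<lambda>r. g (f r)) (\<psi> :: (nat \<Rightarrow> 'a::{comm_monoid_add,finite}) \<Rightarrow> 'm::comm_monoid_add)"
proof (rule ext)
  fix v
  let ?S = "{u::nat\<Rightarrow>'a. u\<in>Fun X \<and> push_star X (\<lambda>r. g (f r)) u = v}"
  let ?T = "{w::nat\<Rightarrow>'a. w\<in>Fun (f ` X) \<and> push_star (f ` X) g w = v}"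
  have fS: "finite ?S" by (rule finite_subset[OF _ finite_Fun[OF fX]]) auto
  have fT: "finite ?T" by (rule finite_subset[OF _ finite_Fun[of "f ` X"]]) (use fX in auto)
  have "(\<Sum>y\<in>?T. sum \<psi> {x\<in>?S. push_star X f x = y}) = sum \<psi> ?S"
    by (rule sum.group[OF fS fT]) (auto simp: ps_Fun ps_comp[OF fX])
  moreover have "\<And>y. y \<in> ?T \<Longrightarrow> {x\<in>?S. push_star X f x = y} = {u\<in>Fun X. push_star X f u = y}"
    by (auto simp: ps_comp[OF fX, symmetric])
  ultimately show "push_cal (f ` X) g (push_cal X f \<psi>) v = push_cal X (\<lambda>r. g (f r)) \<psi> v"
    unfolding push_cal_def by simp
qed

lemma pc_inj:
  assumes fX: "finite X" and k: "\<And>r. r\<in>X \<Longrightarrow> k (h r) = r"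
  shows "push_cal X h \<psi> v = (if v \<in> Fun (h ` X) then \<psi> (push_star (h ` X) k v) else 0)"
proof (cases "v \<in> Fun (h ` X)")
  case True
  have kh: "k ` h ` X = X" using k by (force simp: image_image)
  have fhX: "finite (h ` X)" using fX by simp
  have "{u\<in>Fun X. push_star X h u = v} = {push_star (h ` X) k v}"
  proof (intro equalityI subsetI)
    fix u assume u: "u \<in> {u\<in>Fun X. push_star X h u = v}"
    have "push_star (h ` X) k v = push_star (h ` X) k (push_star X h u)" using u by simp
    also have "\<dots> = push_star X (\<lambda>r. k (h r)) u" by (rule ps_comp[OF fX])
    also have "\<dots> = u" using u k by (intro ps_id) auto
    finally show "u \<in> {push_star (h ` X) k v}" by simp
  next
    fix u assume "u \<in> {push_star (h ` X) k v}"
    then have u: "u = push_star (h ` X) k v" by simp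
    have "u \<in> Fun X" using ps_Fun[of "h ` X" k v] kh u by simp
    moreover have "push_star X h u = v"
    proof -
      have "push_star X h u = push_star (k ` h ` X) h (push_star (h ` X) k v)" using u kh by simp
      also have "\<dots> = push_star (h ` X) (\<lambda>r. h (k r)) v" by (rule ps_comp[OF fhX])
      also have "\<dots> = v" using True k by (intro ps_id) auto
      finally show ?thesis .
    qed
    ultimately show "u \<in> {u\<in>Fun X. push_star X h u = v}" by simp
  qed
  then show ?thesis using True unfolding push_cal_def by simp
next
  case False
  then show ?thesis by (simp add: pc_zero)
qed

lemma pc_sum: "push_cal Z g (\<lambda>w. \<Sum>i\<in>I. \<phi> i w) v = (\<Sum>i\<in>I. push_cal Z g (\<phi> i) v)"
  unfolding push_cal_def by (rule sum.swap)

lemma pc_add: "push_cal Z g (\<lambda>w. a w + b w) v = push_cal Z g a v + push_cal Z g b v"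
  unfolding push_cal_def by (rule sum.distrib)

lemma pc_0: "push_cal Z g (\<lambda>w. 0) v = 0"
  unfolding push_cal_def by simp


lemma cp_cong: "(\<And>X r. X\<in>H \<Longrightarrow> r\<in>X \<Longrightarrow> f r = g r) \<Longrightarrow> cal_push H f \<rho> = cal_push H g \<rho>"
proof -
  assume a: "\<And>X r. X\<in>H \<Longrightarrow> r\<in>X \<Longrightarrow> f r = g r"
  have i: "\<And>X. X \<in> H \<Longrightarrow> f ` X = g ` X" using a by (auto intro: image_cong)
  have s: "\<And>Y. {X\<in>H. f ` X = Y} = {X\<in>H. g ` X = Y}" using i by auto
  have p: "\<And>X. X \<in> H \<Longrightarrow> push_cal X f = push_cal X g" using a by (intro pc_cong) auto
  show ?thesis unfolding cal_push_def s
    by (intro ext sum.cong) (auto simp: p)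
qed

lemma cp_cal:
  fixes \<rho> :: "nat set \<Rightarrow> (nat \<Rightarrow> 'a::comm_monoid_add) \<Rightarrow> 'm::comm_monoid_add"
  shows "cal_push H f \<rho> \<in> calibrations ((`) f ` H)"
  unfolding calibrations_def
proof (intro CollectI conjI allI impI ballI)
  fix Y and w :: "nat \<Rightarrow> 'a" assume "Y \<notin> (`) f ` H"
  then have e: "{X\<in>H. f ` X = Y} = {}" by auto
  show "cal_push H f \<rho> Y w = 0" unfolding cal_push_def e by simp
next
  fix Y and w :: "nat \<Rightarrow> 'a" assume Y: "Y \<in> (`) f ` H" and w: "w \<notin> Fun Y"
  show "cal_push H f \<rho> Y w = 0" unfolding cal_push_def
    by (rule sum.neutral) (use w in \<open>auto intro: pc_zero\<close>)
qed

lemma cp_id: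
  assumes r: "\<rho> \<in> calibrations H" and fin: "\<And>X. X\<in>H \<Longrightarrow> finite X"
    and id: "\<And>X r. X\<in>H \<Longrightarrow> r\<in>X \<Longrightarrow> f r = r"
  shows "cal_push H f \<rho> = \<rho>"
proof (intro ext)
  fix Y v
  have im: "\<And>X. X \<in> H \<Longrightarrow> f ` X = X" using id by force
  have s: "{X\<in>H. f ` X = Y} = (if Y \<in> H then {Y} else {})" using im by auto
  show "cal_push H f \<rho> Y v = \<rho> Y v"
  proof (cases "Y \<in> H")
    case True
    have "push_cal Y f (\<rho> Y) v = (if v \<in> Fun (f ` Y) then \<rho> Y (push_star (f ` Y) (\<lambda>r. r) v) else 0)"
      by (rule pc_inj) (use True fin id in auto)
    also have "\<dots> = \<rho> Y v"
      using True r im[OF True] by (auto simp: calibrations_def ps_id)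
    finally show ?thesis unfolding cal_push_def s using True by simp
  next
    case False
    then show ?thesis using r unfolding cal_push_def s calibrations_def by simp
  qed
qed

lemma cp_comp:
  assumes fH: "finite H" and fin: "\<And>X. X\<in>H \<Longrightarrow> finite X"
  shows "cal_push ((`) f ` H) g (cal_push H f \<rho>) = cal_push H (\<lambda>r. g (f r)) (\<rho> :: nat set \<Rightarrow> (nat \<Rightarrow> 'a::{comm_monoid_add,finite}) \<Rightarrow> 'm::comm_monoid_add)"
proof (intro ext)
  fix Y v
  let ?T = "{Z\<in>(`) f ` H. g ` Z = Y}"
  let ?S = "{X\<in>H. g ` f ` X = Y}"
  have "cal_push ((`) f ` H) g (cal_push H f \<rho>) Y v
      = (\<Sum>Z\<in>?T. \<Sum>X\<in>{X\<in>H. f ` X = Z}. push_cal Z g (push_cal X f (\<rho> X)) v)"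
    unfolding cal_push_def by (simp add: pc_sum)
  also have "\<dots> = (\<Sum>Z\<in>?T. \<Sum>X\<in>{X\<in>?S. f ` X = Z}. push_cal X (\<lambda>r. g (f r)) (\<rho> X) v)"
  proof (intro sum.cong refl)
    fix Z X assume "Z \<in> ?T" and X: "X \<in> {X\<in>?S. f ` X = Z}"
    then show "push_cal Z g (push_cal X f (\<rho> X)) v = push_cal X (\<lambda>r. g (f r)) (\<rho> X) v"
      using pc_comp[OF fin, of X f g "\<rho> X"] by auto
  next
    fix Z assume "Z \<in> ?T"
    then have gZ: "g ` Z = Y" by simp
    show "{X\<in>H. f ` X = Z} = {X\<in>?S. f ` X = Z}"
    proof (rule Collect_cong)
      fix X show "(X\<in>H \<and> f ` X = Z) = (X \<in> ?S \<and> f ` X = Z)"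
        using gZ by (cases "f ` X = Z") simp_all
    qed
  qed
  also have "\<dots> = (\<Sum>X\<in>?S. push_cal X (\<lambda>r. g (f r)) (\<rho> X) v)"
    by (rule sum.group) (use fH in auto)
  also have "\<dots> = cal_push H (\<lambda>r. g (f r)) \<rho> Y v"
    unfolding cal_push_def by (simp add: image_image)
  finally show "cal_push ((`) f ` H) g (cal_push H f \<rho>) Y v = cal_push H (\<lambda>r. g (f r)) \<rho> Y v" .
qed

lemma cp_add:
  assumes r1: "\<rho>1 \<in> calibrations H1" and r2: "\<rho>2 \<in> calibrations H2"
    and f1: "finite H1" and f2: "finite H2"
  shows "cal_push (H1 \<union> H2) f (\<lambda>X w. \<rho>1 X w + \<rho>2 X w) = (\<lambda>Y v. cal_push H1 f \<rho>1 Y v + cal_push H2 f \<rho>2 Y v)"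
proof (intro ext)
  fix Y v
  let ?S = "{X\<in>H1 \<union> H2. f ` X = Y}"
  have fS: "finite ?S" using f1 f2 by auto
  have z1: "\<And>X. X \<notin> H1 \<Longrightarrow> \<rho>1 X = (\<lambda>w. 0)" using r1 by (auto simp: calibrations_def)
  have z2: "\<And>X. X \<notin> H2 \<Longrightarrow> \<rho>2 X = (\<lambda>w. 0)" using r2 by (auto simp: calibrations_def)
  have z1': "\<And>X. X \<notin> H1 \<Longrightarrow> push_cal X f (\<rho>1 X) v = 0" by (simp add: z1 pc_0)
  have z2': "\<And>X. X \<notin> H2 \<Longrightarrow> push_cal X f (\<rho>2 X) v = 0" by (simp add: z2 pc_0)
  have "cal_push (H1 \<union> H2) f (\<lambda>X w. \<rho>1 X w + \<rho>2 X w) Y v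
     = (\<Sum>X\<in>?S. push_cal X f (\<rho>1 X) v) + (\<Sum>X\<in>?S. push_cal X f (\<rho>2 X) v)"
    unfolding cal_push_def by (simp add: pc_add sum.distrib)
  also have "(\<Sum>X\<in>?S. push_cal X f (\<rho>1 X) v) = (\<Sum>X\<in>{X\<in>H1. f ` X = Y}. push_cal X f (\<rho>1 X) v)"
    by (rule sum.mono_neutral_right[OF fS]) (use z1' in blast)+
  also have "(\<Sum>X\<in>?S. push_cal X f (\<rho>2 X) v) = (\<Sum>X\<in>{X\<in>H2. f ` X = Y}. push_cal X f (\<rho>2 X) v)"
    by (rule sum.mono_neutral_right[OF fS]) (use z2' in blast)+
  finally show "cal_push (H1 \<union> H2) f (\<lambda>X w. \<rho>1 X w + \<rho>2 X w) Y v = cal_push H1 f \<rho>1 Y v + cal_push H2 f \<rho>2 Y v"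
    unfolding cal_push_def .
qed

lemma shift_eq: "shift_set l = (`) (\<lambda>r. r + l)"
  by (rule ext) (simp add: shift_set_def)

lemma hyp_fin: "H \<in> hypergraphs l \<Longrightarrow> finite H"
  by (rule finite_subset[of H "Pow {..<l}"]) (auto simp: hypergraphs_def)

lemma hyp_fin2: "H \<in> hypergraphs l \<Longrightarrow> X \<in> H \<Longrightarrow> finite X"
  by (rule finite_subset[of X "{..<l}"]) (auto simp: hypergraphs_def)

lemma cal_cup_eq:
  assumes H: "H \<in> hypergraphs l" and r: "\<rho> \<in> calibrations H"
    and K: "K \<in> hypergraphs m" and s: "\<sigma> \<in> calibrations K"
  shows "cal_cup l H K \<rho> \<sigma> = (\<lambda>X w. \<rho> X w + cal_push K (\<lambda>r. r + l) \<sigma> X w)"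
proof (intro ext)
  fix X w
  show "cal_cup l H K \<rho> \<sigma> X w = \<rho> X w + cal_push K (\<lambda>r. r + l) \<sigma> X w"
  proof (cases "X \<in> H")
    case True
    have e: "{Z\<in>K. (\<lambda>r. r + l) ` Z = X} = {}"
    proof (rule ccontr)
      assume "{Z\<in>K. (\<lambda>r. r + l) ` Z = X} \<noteq> {}"
      then obtain Z where Z: "Z \<in> K" "(\<lambda>r. r + l) ` Z = X" by auto
      then obtain z where "z \<in> Z" using K by (auto simp: hypergraphs_def)
      then have "z + l \<in> X" using Z by auto
      then show False using True H by (auto simp: hypergraphs_def)
    qed
    show ?thesis unfolding cal_cup_def cal_push_def e using True by simp
  next
    case False
    have r0: "\<rho> X w = 0" using False r by (auto simp: calibrations_def)
    show ?thesis
    proof (cases "X \<in> shift_set l ` K")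
      case True
      then obtain Z0 where Z0: "Z0 \<in> K" "X = (\<lambda>r. r + l) ` Z0" by (auto simp: shift_set_def)
      have e: "{Z\<in>K. (\<lambda>r. r + l) ` Z = X} = {Z0}"
        using Z0 by (auto simp: inj_image_eq_iff inj_on_def)
      have iX: "(\<lambda>r. r - l) ` X = Z0" using Z0 by (simp add: image_image)
      have "push_cal Z0 (\<lambda>r. r + l) (\<sigma> Z0) w
          = (if w \<in> Fun X then \<sigma> Z0 (push_star X (\<lambda>r. r - l) w) else 0)"
        using pc_inj[of Z0 "\<lambda>r. r - l" "\<lambda>r. r + l" "\<sigma> Z0" w] hyp_fin2[OF K Z0(1)] Z0 by simp
      then show ?thesis unfolding cal_cup_def cal_push_def e using False True r0 iX by simp
    next
      case True2: False
      have e: "{Z\<in>K. (\<lambda>r. r + l) ` Z = X} = {}" using True2 by (auto simp: shift_set_def)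
      show ?thesis unfolding cal_cup_def cal_push_def e using False True2 r0 by simp
    qed
  qed
qed


lemma GC_map_in:
  assumes f: "f \<in> omega_hom l p" and x: "x \<in> GC l"
  shows "GC_map f x \<in> GC p"
proof -
  obtain H \<rho> where x': "x = (H, \<rho>)" "H \<in> hypergraphs l" "\<rho> \<in> calibrations H"
    using x by (auto simp: GC_def)
  have "(`) f ` H \<in> hypergraphs p"
    using x'(2) f by (auto simp: hypergraphs_def omega_hom_def PiE_def Pi_def)
  then show ?thesis using x' cp_cal[of H f \<rho>] by (simp add: GC_def GC_map_def)
qed

lemma GC_cup_in:
  assumes x: "x \<in> GC l" and y: "y \<in> GC m"
  shows "GC_cup l x y \<in> GC (l + m)"
proof -
  obtain H \<rho> where x': "x = (H, \<rho>)" "H \<in> hypergraphs l" "\<rho> \<in> calibrations H"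
    using x by (auto simp: GC_def)
  obtain K \<sigma> where y': "y = (K, \<sigma>)" "K \<in> hypergraphs m" "\<sigma> \<in> calibrations K"
    using y by (auto simp: GC_def)
  have "hg_cup l H K \<in> hypergraphs (l + m)"
    using x'(2) y'(2) unfolding hypergraphs_def hg_cup_def shift_set_def by (auto; fastforce)
  moreover have "cal_cup l H K \<rho> \<sigma> \<in> calibrations (hg_cup l H K)"
    using x'(3) y'(3) by (auto simp: calibrations_def cal_cup_def hg_cup_def)
  ultimately show ?thesis using x' y' by (simp add: GC_def GC_cup_def)
qed


lemma GC_elim:
  assumes "x \<in> GC l"
  obtains H \<rho> where "x = (H, \<rho>)" "H \<in> hypergraphs l" "\<rho> \<in> calibrations H"
  using assms by (auto simp: GC_def)

lemma ax_id:
  assumes x: "x \<in> GC l"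
  shows "GC_map (omega_id l) x = x"
proof -
  obtain H \<rho> where x': "x = (H, \<rho>)" "H \<in> hypergraphs l" "\<rho> \<in> calibrations H"
    using x by (rule GC_elim)
  have sub: "\<And>X r. X \<in> H \<Longrightarrow> r \<in> X \<Longrightarrow> r < l" using x'(2) by (auto simp: hypergraphs_def)
  have idr: "\<And>X r. X \<in> H \<Longrightarrow> r \<in> X \<Longrightarrow> omega_id l r = r" using sub by (simp add: omega_id_def)
  have "\<And>X. X \<in> H \<Longrightarrow> omega_id l ` X = X" using idr by force
  then have "(`) (omega_id l) ` H = H" by force
  moreover have "cal_push H (omega_id l) \<rho> = \<rho>"
    by (rule cp_id[OF x'(3)]) (use hyp_fin2[OF x'(2)] idr in auto)
  ultimately show ?thesis using x' by (simp add: GC_map_def)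
qed

lemma ax_comp:
  fixes x :: "('a::{comm_monoid_add,finite}, 'm::comm_monoid_add) chg"
  assumes f: "f \<in> omega_hom l p" and g: "g \<in> omega_hom p q" and x: "x \<in> GC l"
  shows "GC_map (omega_comp l g f) x = GC_map g (GC_map f x)"
proof -
  obtain H \<rho> where x': "x = (H, \<rho>)" "H \<in> hypergraphs l" "\<rho> \<in> calibrations H"
    using x by (rule GC_elim)
  have sub: "\<And>X r. X \<in> H \<Longrightarrow> r \<in> X \<Longrightarrow> r < l" using x'(2) by (auto simp: hypergraphs_def)
  have cr: "\<And>X r. X \<in> H \<Longrightarrow> r \<in> X \<Longrightarrow> omega_comp l g f r = g (f r)"
    using sub by (simp add: omega_comp_def compose_def)
  have "\<And>X. X \<in> H \<Longrightarrow> omega_comp l g f ` X = g ` f ` X"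
    using cr by (force simp: image_image)
  then have "(`) (omega_comp l g f) ` H = (`) g ` (`) f ` H" by (force simp: image_image)
  moreover have "cal_push H (omega_comp l g f) \<rho> = cal_push ((`) f ` H) g (cal_push H f \<rho>)"
  proof -
    have "cal_push H (omega_comp l g f) \<rho> = cal_push H (\<lambda>r. g (f r)) \<rho>"
      by (rule cp_cong) (use cr in auto)
    also have "\<dots> = cal_push ((`) f ` H) g (cal_push H f \<rho>)"
      by (rule cp_comp[symmetric]) (use hyp_fin[OF x'(2)] hyp_fin2[OF x'(2)] in auto)
    finally show ?thesis .
  qed
  ultimately show ?thesis using x' by (simp add: GC_map_def)
qed

lemma ax_assoc:
  fixes x :: "('a::{comm_monoid_add,finite}, 'm::comm_monoid_add) chg"
  assumes x: "x \<in> GC l" and y: "y \<in> GC m" and z: "z \<in> GC n"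
  shows "GC_cup (l + m) (GC_cup l x y) z = GC_cup l x (GC_cup m y z)"
proof -
  obtain H \<rho> where x': "x = (H, \<rho>)" "H \<in> hypergraphs l" "\<rho> \<in> calibrations H"
    using x by (rule GC_elim)
  obtain K \<sigma> where y': "y = (K, \<sigma>)" "K \<in> hypergraphs m" "\<sigma> \<in> calibrations K"
    using y by (rule GC_elim)
  obtain L \<tau> where z': "z = (L, \<tau>)" "L \<in> hypergraphs n" "\<tau> \<in> calibrations L"
    using z by (rule GC_elim)
  have xy: "(hg_cup l H K, cal_cup l H K \<rho> \<sigma>) \<in> GC (l + m)"
    using GC_cup_in[OF x y] x' y' by (simp add: GC_cup_def)
  have yz: "(hg_cup m K L, cal_cup m K L \<sigma> \<tau>) \<in> GC (m + n)"
    using GC_cup_in[OF y z] y' z' by (simp add: GC_cup_def)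
  have hg: "hg_cup (l + m) (hg_cup l H K) L = hg_cup l H (hg_cup m K L)"
    by (auto simp: hg_cup_def shift_eq image_image image_Un add.assoc ac_simps)
  have fK: "finite K" "\<And>X. X \<in> K \<Longrightarrow> finite X" using hyp_fin[OF y'(2)] hyp_fin2[OF y'(2)] by auto
  have fL: "finite L" "\<And>X. X \<in> L \<Longrightarrow> finite X" using hyp_fin[OF z'(2)] hyp_fin2[OF z'(2)] by auto
  have c1: "cal_cup (l + m) (hg_cup l H K) L (cal_cup l H K \<rho> \<sigma>) \<tau>
      = (\<lambda>X w. (\<rho> X w + cal_push K (\<lambda>r. r + l) \<sigma> X w) + cal_push L (\<lambda>r. r + (l + m)) \<tau> X w)"
    using cal_cup_eq[OF x'(2,3) y'(2,3)] cal_cup_eq[of "hg_cup l H K" "l+m" "cal_cup l H K \<rho> \<sigma>" L n \<tau>]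
      xy z'(2,3) by (simp add: GC_def)
  have "cal_push (hg_cup m K L) (\<lambda>r. r + l) (cal_cup m K L \<sigma> \<tau>)
     = cal_push (K \<union> (`) (\<lambda>r. r + m) ` L) (\<lambda>r. r + l) (\<lambda>X w. \<sigma> X w + cal_push L (\<lambda>r. r + m) \<tau> X w)"
    using cal_cup_eq[OF y'(2,3) z'(2,3)] by (simp add: hg_cup_def shift_eq)
  also have "\<dots> = (\<lambda>Y v. cal_push K (\<lambda>r. r + l) \<sigma> Y v
        + cal_push ((`) (\<lambda>r. r + m) ` L) (\<lambda>r. r + l) (cal_push L (\<lambda>r. r + m) \<tau>) Y v)"
    by (rule cp_add[OF y'(3) cp_cal]) (use fK fL in auto)
  also have "cal_push ((`) (\<lambda>r. r + m) ` L) (\<lambda>r. r + l) (cal_push L (\<lambda>r. r + m) \<tau>)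
      = cal_push L (\<lambda>r. r + m + l) \<tau>"
    by (rule cp_comp) (use fL in auto)
  also have "cal_push L (\<lambda>r. r + m + l) \<tau> = cal_push L (\<lambda>r. r + (l + m)) \<tau>"
    by (simp add: ac_simps)
  finally have c2: "cal_cup l H (hg_cup m K L) \<rho> (cal_cup m K L \<sigma> \<tau>)
     = (\<lambda>X w. \<rho> X w + (cal_push K (\<lambda>r. r + l) \<sigma> X w + cal_push L (\<lambda>r. r + (l + m)) \<tau> X w))"
    using cal_cup_eq[OF x'(2,3), of "hg_cup m K L" "m + n" "cal_cup m K L \<sigma> \<tau>"] yz
    by (simp add: GC_def)
  show ?thesis using x' y' z' hg c1 c2 by (simp add: GC_cup_def add.assoc)
qed

lemma ax_unit:
  assumes x: "x \<in> GC l"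
  shows "GC_cup l x GC_unit = x \<and> GC_cup 0 GC_unit x = x"
proof -
  obtain H \<rho> where x': "x = (H, \<rho>)" "H \<in> hypergraphs l" "\<rho> \<in> calibrations H"
    using x by (rule GC_elim)
  have u: "({} :: nat set set) \<in> hypergraphs 0" "(cal_unit :: nat set \<Rightarrow> (nat \<Rightarrow> 'a) \<Rightarrow> 'b) \<in> calibrations {}"
    by (auto simp: hypergraphs_def calibrations_def cal_unit_def)
  have "cal_cup l H {} \<rho> cal_unit = \<rho>"
    using cal_cup_eq[OF x'(2,3) u] by (simp add: cal_push_def)
  moreover have "cal_cup 0 {} H cal_unit \<rho> = \<rho>"
  proof -
    have "cal_cup 0 {} H cal_unit \<rho> = cal_push H (\<lambda>r. r + 0) \<rho>"
      using cal_cup_eq[OF u x'(2,3)] by (simp add: cal_unit_def)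
    also have "\<dots> = \<rho>" by (rule cp_id[OF x'(3)]) (use hyp_fin2[OF x'(2)] in auto)
    finally show ?thesis .
  qed
  ultimately show ?thesis using x'
    by (simp add: GC_cup_def GC_unit_def hg_cup_def shift_eq)
qed


lemma ax_nat:
  fixes x :: "('a::{comm_monoid_add,finite}, 'm::comm_monoid_add) chg"
  assumes f: "f \<in> omega_hom l p" and g: "g \<in> omega_hom m q" and x: "x \<in> GC l" and y: "y \<in> GC m"
  shows "GC_map (omega_cup l m p f g) (GC_cup l x y) = GC_cup p (GC_map f x) (GC_map g y)"
proof -
  obtain H \<rho> where x': "x = (H, \<rho>)" "H \<in> hypergraphs l" "\<rho> \<in> calibrations H"
    using x by (rule GC_elim)
  obtain K \<sigma> where y': "y = (K, \<sigma>)" "K \<in> hypergraphs m" "\<sigma> \<in> calibrations K"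
    using y by (rule GC_elim)
  define F where "F = omega_cup l m p f g"
  have subH: "\<And>X r. X \<in> H \<Longrightarrow> r \<in> X \<Longrightarrow> r < l" using x'(2) by (auto simp: hypergraphs_def)
  have subK: "\<And>X r. X \<in> K \<Longrightarrow> r \<in> X \<Longrightarrow> r < m" using y'(2) by (auto simp: hypergraphs_def)
  have Ff: "\<And>X r. X \<in> H \<Longrightarrow> r \<in> X \<Longrightarrow> F r = f r" using subH by (simp add: F_def omega_cup_def)
  have Fg: "\<And>X r. X \<in> K \<Longrightarrow> r \<in> X \<Longrightarrow> F (r + l) = g r + p" using subK by (simp add: F_def omega_cup_def)
  have fH: "finite H" "\<And>X. X \<in> H \<Longrightarrow> finite X" using hyp_fin[OF x'(2)] hyp_fin2[OF x'(2)] by auto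
  have fK: "finite K" "\<And>X. X \<in> K \<Longrightarrow> finite X" using hyp_fin[OF y'(2)] hyp_fin2[OF y'(2)] by auto
  have mf: "GC_map f x \<in> GC p" and mg: "GC_map g y \<in> GC q" using GC_map_in[OF f x] GC_map_in[OF g y] by auto
  then have hf: "(`) f ` H \<in> hypergraphs p" and hg: "(`) g ` K \<in> hypergraphs q"
    using x' y' by (auto simp: GC_map_def GC_def)
  have i1: "(`) F ` H = (`) f ` H"
  proof -
    have "\<And>X. X \<in> H \<Longrightarrow> F ` X = f ` X" using Ff by (auto intro: image_cong)
    then show ?thesis by (auto intro: image_cong)
  qed
  have i2: "(`) F ` (`) (\<lambda>r. r + l) ` K = (`) (\<lambda>r. r + p) ` (`) g ` K"
  proof -
    have "\<And>X. X \<in> K \<Longrightarrow> F ` (\<lambda>r. r + l) ` X = (\<lambda>r. r + p) ` g ` X"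
      using Fg by (force simp: image_image)
    then show ?thesis by (force simp: image_image)
  qed
  have hyp: "(`) F ` hg_cup l H K = hg_cup p ((`) f ` H) ((`) g ` K)"
    using i1 i2 by (simp add: hg_cup_def shift_eq image_Un)
  have "cal_push (hg_cup l H K) F (cal_cup l H K \<rho> \<sigma>)
      = cal_push (H \<union> (`) (\<lambda>r. r + l) ` K) F (\<lambda>X w. \<rho> X w + cal_push K (\<lambda>r. r + l) \<sigma> X w)"
    using cal_cup_eq[OF x'(2,3) y'(2,3)] by (simp add: hg_cup_def shift_eq)
  also have "\<dots> = (\<lambda>Y v. cal_push H F \<rho> Y v + cal_push ((`) (\<lambda>r. r + l) ` K) F (cal_push K (\<lambda>r. r + l) \<sigma>) Y v)"
    by (rule cp_add[OF x'(3) cp_cal]) (use fH fK in auto)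
  also have "cal_push H F \<rho> = cal_push H f \<rho>" by (rule cp_cong) (use Ff in auto)
  also have "cal_push ((`) (\<lambda>r. r + l) ` K) F (cal_push K (\<lambda>r. r + l) \<sigma>) = cal_push K (\<lambda>r. F (r + l)) \<sigma>"
    by (rule cp_comp) (use fK in auto)
  also have "\<dots> = cal_push K (\<lambda>r. g r + p) \<sigma>" by (rule cp_cong) (use Fg in auto)
  also have "\<dots> = cal_push ((`) g ` K) (\<lambda>r. r + p) (cal_push K g \<sigma>)"
    by (rule cp_comp[symmetric]) (use fK in auto)
  finally have c: "cal_push (hg_cup l H K) F (cal_cup l H K \<rho> \<sigma>)
     = (\<lambda>Y v. cal_push H f \<rho> Y v + cal_push ((`) g ` K) (\<lambda>r. r + p) (cal_push K g \<sigma>) Y v)" .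
  have c2: "cal_cup p ((`) f ` H) ((`) g ` K) (cal_push H f \<rho>) (cal_push K g \<sigma>)
     = (\<lambda>Y v. cal_push H f \<rho> Y v + cal_push ((`) g ` K) (\<lambda>r. r + p) (cal_push K g \<sigma>) Y v)"
    by (rule cal_cup_eq[OF hf cp_cal hg cp_cal])
  show ?thesis using x' y' hyp c c2 unfolding F_def by (simp add: GC_map_def GC_cup_def)
qed

theorem proposition3p26:
  shows "graded_Omega_monad
           (GC :: nat \<Rightarrow> ('a::{comm_monoid_add,finite}, 'm::{comm_monoid_add,finite}) chg set)
           GC_map GC_cup GC_unit"
  unfolding graded_Omega_monad_def
proof (intro conjI allI impI)
  show "GC_unit \<in> (GC 0 :: ('a, 'm) chg set)"
    by (auto simp: GC_unit_def GC_def hypergraphs_def calibrations_def cal_unit_def)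
qed (auto intro: GC_map_in GC_cup_in ax_id ax_comp ax_assoc ax_nat dest: ax_unit)

end
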